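(* Let $n\ge1$, $\eta>0$ with $C_1\eta<1$, and let $\{X_t\}_{0\le t\le n}$ (non-negative) and $\{U_t\}_{1\le t\le n}$ be adapted to a filtration $\{\mathcal F_t\}$ and satisfy, almost surely for $1\le t\le n$, $$X_t\le(1-C_1\eta)X_{t-1}+U_t,\quad \big|\mathbb E(U_t\mid\mathcal F_{t-1})\big|\le C_2\eta^2+\sum_{i=1}^mA_i\eta^{1+a_i}X_{t-1}^{b_i},\quad |U_t|\le C_3\eta\sqrt{X_{t-1}}+\sum_{i=1}^mB_i\eta^{1/2+c_i}X_{t-1}^{d_i},$$ with positive constants $C_1,C_2,C_3,A_i,B_i,a_i,b_i,c_i,d_i$. Let $$D:=\max_{1\le i\le m}\Big\{\frac{A_i}{C_1}\Big\}\vee\max_{1\le i\le m}\Big\{\frac{\sqrt{m+1}\,B_i}{\sqrt{C_1}}\Big\}\vee\frac{C_2}{C_1}\vee\frac{C_3\sqrt{m+1}}{\sqrt{C_1}},$$ and for $r\in(0,1)$, $\delta\in(0,1)$, $$D_\delta(r):=\frac{8D}{(1-C_1\eta)^n}\Big(\sqrt{\log(1/\delta)}\Big(\sqrt{\eta r}+\sum_{i=1}^m\eta^{c_i}r^{d_i}\Big)+\eta+\sum_{i=1}^m\eta^{a_i}r^{b_i}\Big).$$ Then for any $\varepsilon_0>0$ with $\varepsilon_0+D_\delta(r)\le r$ and any event $A\in\mathcal F_0$ with $A\subset\{X_0\le\varepsilon_0\}$ and $\mathbb P(A)>0$, $$\mathbb P\Big(\big\{\exists t\in[1,n]:\ X_t\ge(1-C_1\eta)^t(\varepsilon_0+D_\delta(r))\big\}\cap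 A\Big)\le\delta.$$ *)

theory Defs
  imports "HOL-Probability.Probability"
begin

definition Dconst ::
  "nat \<Rightarrow> real \<Rightarrow> real \<Rightarrow> real \<Rightarrow> (nat \<Rightarrow> real) \<Rightarrow> (nat \<Rightarrow> real) \<Rightarrow> real" where
  "Dconst m C1 C2 C3 A B =
     Max ({C2 / C1, C3 * sqrt (real m + 1) / sqrt C1}
          \<union> (\<lambda>i. A i / C1) ` {1..m}
          \<union> (\<lambda>i. sqrt (real m + 1) * B i / sqrt C1) ` {1..m})"

definition Ddelta ::
  "nat \<Rightarrow> nat \<Rightarrow> real \<Rightarrow> real \<Rightarrow> real \<Rightarrow> real \<Rightarrow> (nat \<Rightarrow> real) \<Rightarrow> (nat \<Rightarrow> real)
   \<Rightarrow> (nat \<Rightarrow> real) \<Rightarrow> (nat \<Rightarrow> real) \<Rightarrow> (nat \<Rightarrow> real) \<Rightarrow> (nat \<Rightarrow> real)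
   \<Rightarrow> real \<Rightarrow> real \<Rightarrow> real" where
  "Ddelta n m C1 C2 C3 \<eta> A B a b c d \<delta> r =
     8 * Dconst m C1 C2 C3 A B / (1 - C1 * \<eta>) ^ n *
     (sqrt (ln (1 / \<delta>)) * (sqrt (\<eta> * r) + (\<Sum>i=1..m. \<eta> powr c i * r powr d i))
      + \<eta> + (\<Sum>i=1..m. \<eta> powr a i * r powr b i))"

end

theory Submission imports Defs begin

lemma cosh_le_exp_sq:
  fixes y :: real assumes "y \<ge> 0"
  shows "cosh y \<le> exp (y\<^sup>2 / 2)"
proof -
  have h: "- (2*y) * (1/2) + ln (1 + (1/2) * (exp (2*y) - 1)) \<le> (2*y)\<^sup>2 / 8"
    using Hoeffdings_lemma_aux[of "2*y" "1/2"] assms by simp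
  have e: "1 + (1/2) * (exp (2*y) - 1) = exp y * cosh y"
    by (simp add: cosh_def exp_add[symmetric] field_simps exp_minus flip: exp_add) 
  have cp: "cosh y > 0" by simp
  have "ln (exp y * cosh y) = y + ln (cosh y)"
    using cp by (simp add: ln_mult)
  with h e have "ln (cosh y) \<le> y\<^sup>2/2" by (simp add: power2_eq_square)
  then show ?thesis using cp
    by (metis exp_ln exp_le_cancel_iff)
qed

lemma exp_chord:
  fixes x c \<theta> :: real assumes "c > 0" "\<bar>x\<bar> \<le> c" "\<theta> \<ge> 0"
  shows "exp (\<theta> * x) \<le> cosh (\<theta> * c) + sinh (\<theta> * c) / c * x"
proof -
  define l where "l = (c - x) / (2*c)"
  have l01: "0 \<le> l" "l \<le> 1" using assms by (auto simp: l_def field_simps)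
  have xeq: "x = (1 - l) * c + l * (-c)" using assms by (simp add: l_def field_simps)
  have "exp (\<theta> * ((1 - l) * c + l * (-c))) \<le> (1 - l) * exp (\<theta> * c) + l * exp (\<theta> * (-c))"
    using convex_onD[OF convex_on_exp[OF assms(3)], of l c "-c"] l01 by simp
  also have "\<dots> = cosh (\<theta> * c) + sinh (\<theta> * c) / c * x"
    using assms by (simp add: l_def cosh_def sinh_def field_simps)
  finally show ?thesis using xeq by simp
qed

lemma bounded_integrable:
  fixes f :: "'a \<Rightarrow> real"
  assumes "prob_space M" "f \<in> borel_measurable M" "\<And>x. x \<in> space M \<Longrightarrow> \<bar>f x\<bar> \<le> K"
  shows "integrable M f"
proof -
  interpret prob_space M by fact
  show ?thesis
    by (rule integrable_const_bound[of f K]) (use assms in auto)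
qed

lemma azuma_mgf:
  fixes M :: "'a measure" and F :: "nat \<Rightarrow> 'a measure" and V :: "nat \<Rightarrow> 'a \<Rightarrow> real"
    and cc :: "nat \<Rightarrow> real" and \<theta> :: real and n :: nat
  assumes prob: "prob_space M"
   and sub: "\<And>t. subalgebra M (F t)"
   and mono: "\<And>s t. s \<le> t \<Longrightarrow> sets (F s) \<subseteq> sets (F t)"
   and Vmeas: "\<And>s. s \<in> {1..n} \<Longrightarrow> V s \<in> borel_measurable (F s)"
   and Vbd: "\<And>s x. s \<in> {1..n} \<Longrightarrow> x \<in> space M \<Longrightarrow> \<bar>V s x\<bar> \<le> cc s"
   and ccpos: "\<And>s. s \<in> {1..n} \<Longrightarrow> cc s > 0"
   and th: "\<theta> \<ge> 0"
  defines "Wc \<equiv> \<lambda>s x. max (- cc s) (min (cc s) (real_cond_exp M (F (s-1)) (V s) x))"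
  shows "(\<integral>x. exp (\<theta> * (\<Sum>s=1..n. V s x - Wc s x)) \<partial>M) \<le> exp (\<theta>\<^sup>2/2 * (\<Sum>s=1..n. (2*cc s)\<^sup>2))"
proof -
  interpret prob_space M by fact
  have sfs: "sigma_finite_subalgebra M (F t)" for t
    by (intro finite_measure_subalgebra_is_sigma_finite) (unfold_locales, rule sub)
  have subsub: "subalgebra (F t) (F s)" if "s \<le> t" for s t
    using sub[of s] sub[of t] mono[OF that] unfolding subalgebra_def by auto
  have measM: "f \<in> borel_measurable M" if "f \<in> borel_measurable (F t)" for f t
    using measurable_from_subalg[OF sub that] .
  have measFt: "f \<in> borel_measurable (F t)" if "f \<in> borel_measurable (F s)" "s \<le> t" for f s t
    using measurable_from_subalg[OF subsub[OF that(2)] that(1)] .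
  have Wcmeas: "Wc s \<in> borel_measurable (F (s-1))" for s
    unfolding Wc_def by measurable
  have WcM: "Wc s \<in> borel_measurable M" for s using measM[OF Wcmeas] .
  have Wcbd: "\<bar>Wc s x\<bar> \<le> cc s" if "s \<in> {1..n}" for s x
    using ccpos[OF that] unfolding Wc_def by auto
  have VM: "V s \<in> borel_measurable M" if "s \<in> {1..n}" for s using measM[OF Vmeas[OF that]] .
  have Vint: "integrable M (V s)" if "s \<in> {1..n}" for s
    using bounded_integrable[OF prob VM[OF that] Vbd[OF that]] .
  have WcAE: "AE x in M. Wc s x = real_cond_exp M (F (s-1)) (V s) x" if "s \<in> {1..n}" for s
  proof -
    have "AE x in M. real_cond_exp M (F (s-1)) (V s) x \<le> cc s"
      by (rule sigma_finite_subalgebra.real_cond_exp_le_c[OF sfs Vint[OF that]])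
         (use Vbd[OF that] in \<open>auto intro!: AE_I2 simp: abs_le_iff\<close>)
    moreover have "AE x in M. real_cond_exp M (F (s-1)) (V s) x \<ge> - cc s"
      by (rule sigma_finite_subalgebra.real_cond_exp_ge_c[OF sfs Vint[OF that]])
         (use Vbd[OF that] in \<open>auto intro!: AE_I2 simp: abs_le_iff, smt (verit)\<close>)
    ultimately show ?thesis unfolding Wc_def by eventually_elim auto
  qed
  define Z where "Z = (\<lambda>t x. \<Sum>s=1..t. V s x - Wc s x)"
  have Zmeas: "Z t \<in> borel_measurable (F t)" if "t \<le> n" for t
    unfolding Z_def
  proof (intro borel_measurable_sum borel_measurable_diff)
    fix s assume s: "s \<in> {1..t}"
    then have s': "s \<in> {1..n}" using that by auto
    show "V s \<in> borel_measurable (F t)" using measFt[OF Vmeas[OF s']] s by auto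
    show "Wc s \<in> borel_measurable (F t)" using measFt[OF Wcmeas, of s t] s by auto
  qed
  have Zbd: "\<bar>Z t x\<bar> \<le> (\<Sum>s=1..n. 2 * cc s)" if "t \<le> n" "x \<in> space M" for t x
  proof -
    have "\<bar>Z t x\<bar> \<le> (\<Sum>s=1..t. \<bar>V s x - Wc s x\<bar>)" unfolding Z_def by (rule sum_abs)
    also have "\<dots> \<le> (\<Sum>s=1..t. 2 * cc s)"
    proof (rule sum_mono)
      fix s assume "s \<in> {1..t}"
      then have s': "s \<in> {1..n}" using that by auto
      show "\<bar>V s x - Wc s x\<bar> \<le> 2 * cc s" using Vbd[OF s' that(2)] Wcbd[OF s', of x] by auto
    qed
    also have "\<dots> \<le> (\<Sum>s=1..n. 2 * cc s)"
      by (rule sum_mono2) (use that ccpos in \<open>auto intro: less_imp_le\<close>)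
    finally show ?thesis .
  qed
  define K where "K = (\<Sum>s=1..n. 2 * cc s)"
  have Ybd: "\<bar>exp (\<theta> * Z t x)\<bar> \<le> exp (\<theta> * K)" if "t \<le> n" "x \<in> space M" for t x
    using Zbd[OF that] th unfolding K_def by (auto intro: mult_left_mono)
  have main: "(\<integral>x. exp (\<theta> * Z t x) \<partial>M) \<le> exp (\<theta>\<^sup>2/2 * (\<Sum>s=1..t. (2*cc s)\<^sup>2))" if "t \<le> n" for t
    using that
  proof (induction t)
    case 0
    then show ?case by (simp add: Z_def)
  next
    case (Suc t)
    have tn: "t \<le> n" and s1: "Suc t \<in> {1..n}" using Suc.prems by auto
    define Y where "Y = (\<lambda>x. exp (\<theta> * Z t x))"
    define Dd where "Dd = (\<lambda>x. V (Suc t) x - Wc (Suc t) x)"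
    define c where "c = 2 * cc (Suc t)"
    have cpos: "c > 0" using ccpos[OF s1] by (simp add: c_def)
    have YF: "Y \<in> borel_measurable (F t)" unfolding Y_def using Zmeas[OF tn] by measurable
    have YM: "Y \<in> borel_measurable M" using measM[OF YF] .
    have DdM: "Dd \<in> borel_measurable M" unfolding Dd_def using VM[OF s1] WcM by measurable
    have Ddbd: "\<bar>Dd x\<bar> \<le> c" if "x \<in> space M" for x
      using Vbd[OF s1 that] Wcbd[OF s1, of x] by (auto simp: Dd_def c_def)
    have Yb: "\<bar>Y x\<bar> \<le> exp (\<theta> * K)" if "x \<in> space M" for x
      using Ybd[OF tn that] by (simp add: Y_def)
    have intY: "integrable M Y" by (rule bounded_integrable[OF prob YM Yb])
    have intYDd: "integrable M (\<lambda>x. Y x * Dd x)"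
      by (rule bounded_integrable[OF prob _, of _ "exp (\<theta> * K) * c"])
         (use YM DdM in measurable, use Yb Ddbd in \<open>auto simp: abs_mult intro: mult_mono\<close>)
    have intYV: "integrable M (\<lambda>x. Y x * V (Suc t) x)"
      by (rule bounded_integrable[OF prob _, of _ "exp (\<theta> * K) * cc (Suc t)"])
         (use YM VM[OF s1] in measurable, use Yb Vbd[OF s1] in \<open>auto simp: abs_mult intro: mult_mono\<close>)
    have intYW: "integrable M (\<lambda>x. Y x * Wc (Suc t) x)"
      by (rule bounded_integrable[OF prob _, of _ "exp (\<theta> * K) * cc (Suc t)"])
         (use YM WcM in measurable, use Yb Wcbd[OF s1] in \<open>auto simp: abs_mult intro: mult_mono\<close>)
    have ZS: "Z (Suc t) x = Z t x + Dd x" for x by (simp add: Z_def Dd_def)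
    have eqexp: "exp (\<theta> * Z (Suc t) x) = Y x * exp (\<theta> * Dd x)" for x
      by (simp add: ZS Y_def distrib_left exp_add)
    define A where "A = cosh (\<theta> * c)"
    define B where "B = sinh (\<theta> * c) / c"
    have pw: "exp (\<theta> * Z (Suc t) x) \<le> A * Y x + B * (Y x * Dd x)" if "x \<in> space M" for x
    proof -
      have "exp (\<theta> * Dd x) \<le> A + B * Dd x"
        unfolding A_def B_def using exp_chord[OF cpos Ddbd[OF that] th] by simp
      then have "Y x * exp (\<theta> * Dd x) \<le> Y x * (A + B * Dd x)"
        by (rule mult_left_mono) (simp add: Y_def)
      then show ?thesis by (simp add: eqexp algebra_simps)
    qed
    have intZS: "integrable M (\<lambda>x. exp (\<theta> * Z (Suc t) x))"
      by (rule bounded_integrable[OF prob _ Ybd[OF Suc.prems]]) (use measM[OF Zmeas[OF Suc.prems]] in measurable)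
    have orth: "(\<integral>x. Y x * Dd x \<partial>M) = 0"
    proof -
      have "(\<integral>x. Y x * Dd x \<partial>M) = (\<integral>x. Y x * V (Suc t) x \<partial>M) - (\<integral>x. Y x * Wc (Suc t) x \<partial>M)"
        unfolding Dd_def right_diff_distrib by (rule Bochner_Integration.integral_diff[OF intYV intYW])
      also have "(\<integral>x. Y x * Wc (Suc t) x \<partial>M) = (\<integral>x. Y x * real_cond_exp M (F t) (V (Suc t)) x \<partial>M)"
        by (rule integral_cong_AE) (use YM WcM in measurable, use WcAE[OF s1] in auto)
      also have "\<dots> = (\<integral>x. Y x * V (Suc t) x \<partial>M)"
        by (rule sigma_finite_subalgebra.real_cond_exp_intg(2)[OF sfs intYV YF VM[OF s1]])
      finally show ?thesis by simp
    qed
    have "(\<integral>x. exp (\<theta> * Z (Suc t) x) \<partial>M) \<le> (\<integral>x. A * Y x + B * (Y x * Dd x) \<partial>M)"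
      by (rule integral_mono[OF intZS]) (use intY intYDd pw in auto)
    also have "\<dots> = A * (\<integral>x. Y x \<partial>M) + B * (\<integral>x. Y x * Dd x \<partial>M)"
      using intY intYDd by simp
    also have "\<dots> = A * (\<integral>x. Y x \<partial>M)" using orth by simp
    also have "\<dots> \<le> exp ((\<theta> * c)\<^sup>2 / 2) * exp (\<theta>\<^sup>2/2 * (\<Sum>s=1..t. (2*cc s)\<^sup>2))"
    proof (rule mult_mono)
      show "A \<le> exp ((\<theta> * c)\<^sup>2 / 2)" unfolding A_def
        by (rule cosh_le_exp_sq) (use th cpos in simp)
      show "(\<integral>x. Y x \<partial>M) \<le> exp (\<theta>\<^sup>2/2 * (\<Sum>s=1..t. (2*cc s)\<^sup>2))"
        using Suc.IH[OF tn] by (simp add: Y_def)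
      show "0 \<le> exp ((\<theta> * c)\<^sup>2 / 2)" by simp
      show "0 \<le> (\<integral>x. Y x \<partial>M)" by (rule integral_nonneg_AE) (simp add: Y_def)
    qed
    also have "\<dots> = exp (\<theta>\<^sup>2/2 * (\<Sum>s=1..Suc t. (2*cc s)\<^sup>2))"
      by (simp add: c_def exp_add[symmetric] power_mult_distrib algebra_simps)
    finally show ?case .
  qed
  show ?thesis using main[of n] by (simp add: Z_def)
qed

lemma geom_inv_sum:
  fixes q :: real assumes "0 < q" "q < 1"
  shows "(\<Sum>s=1..t. (1/q)^s) \<le> (1/q)^t / (1 - q)"
proof (induction t)
  case 0 then show ?case using assms by simp
next
  case (Suc t)
  have "(\<Sum>s=1..Suc t. (1/q)^s) = (\<Sum>s=1..t. (1/q)^s) + (1/q)^Suc t" by simp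
  also have "\<dots> \<le> (1/q)^t / (1 - q) + (1/q)^Suc t" using Suc by simp
  also have "\<dots> = (1/q)^Suc t / (1 - q)"
    using assms by (simp add: field_simps)
  finally show ?case .
qed

lemma pathwise:
  fixes Xw Uw CEw :: "nat \<Rightarrow> real" and q \<Theta> \<epsilon>0 \<beta> :: real and n t :: nat
  assumes q: "0 < q" "q < 1" and eps: "\<epsilon>0 < \<Theta>" and X0: "Xw 0 \<le> \<epsilon>0" and beta: "\<beta> \<ge> 0"
    and rec: "\<And>t. t \<in> {1..n} \<Longrightarrow> Xw t \<le> q * Xw (t-1) + Uw t"
    and ce: "\<And>s. s \<in> {1..n} \<Longrightarrow> Xw (s-1) < q^(s-1) * \<Theta> \<Longrightarrow> \<bar>CEw s\<bar> \<le> \<beta>"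
    and t: "t \<in> {1..n}" "q^t * \<Theta> \<le> Xw t"
  shows "\<exists>t0\<in>{1..n}. (\<forall>s\<in>{1..n}. (\<forall>j\<le>s-1. Xw j < q^j * \<Theta>) \<longleftrightarrow> s \<le> t0) \<and>
           (\<Sum>s=1..t0. (1/q)^s * (Uw s - CEw s)) \<ge> \<Theta> - \<epsilon>0 - \<beta> * (1/q)^n / (1 - q)"
proof -
  define P where "P = (\<lambda>t. t \<in> {1..n} \<and> q^t * \<Theta> \<le> Xw t)"
  define t0 where "t0 = (LEAST t. P t)"
  have Pt0: "P t0" unfolding t0_def by (rule LeastI[of P t]) (use t in \<open>simp add: P_def\<close>)
  have t0n: "t0 \<in> {1..n}" and Xt0: "q^t0 * \<Theta> \<le> Xw t0" using Pt0 by (auto simp: P_def)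
  have below: "Xw j < q^j * \<Theta>" if "j < t0" for j
  proof (cases "j = 0")
    case True then show ?thesis using eps X0 by simp
  next
    case False
    have "\<not> P j" unfolding t0_def using not_less_Least that t0_def by blast
    then show ?thesis using False that t0n by (auto simp: P_def)
  qed
  have iff: "(\<forall>j\<le>s-1. Xw j < q^j * \<Theta>) \<longleftrightarrow> s \<le> t0" if "s \<in> {1..n}" for s
  proof
    assume h: "\<forall>j\<le>s-1. Xw j < q^j * \<Theta>"
    show "s \<le> t0"
    proof (rule ccontr)
      assume "\<not> s \<le> t0"
      then have "t0 \<le> s - 1" by simp
      then show False using h Xt0 by force
    qed
  next
    assume "s \<le> t0"
    then show "\<forall>j\<le>s-1. Xw j < q^j * \<Theta>" using below that by auto
  qed
  have tele: "(1/q)^t * Xw t \<le> Xw 0 + (\<Sum>s=1..t. (1/q)^s * Uw s)" if "t \<le> n" for t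
    using that
  proof (induction t)
    case 0 then show ?case by simp
  next
    case (Suc t)
    have r: "Xw (Suc t) \<le> q * Xw t + Uw (Suc t)" using rec[of "Suc t"] Suc.prems by simp
    have pp: "(1/q)^Suc t > 0" using q by simp
    have "(1/q)^Suc t * Xw (Suc t) \<le> (1/q)^Suc t * (q * Xw t + Uw (Suc t))"
      using mult_left_mono[OF r less_imp_le[OF pp]] .
    also have "\<dots> = (1/q)^t * Xw t + (1/q)^Suc t * Uw (Suc t)"
      using q by (simp add: field_simps)
    also have "\<dots> \<le> Xw 0 + (\<Sum>s=1..Suc t. (1/q)^s * Uw s)"
      using Suc.IH Suc.prems by simp
    finally show ?case .
  qed
  have ceb: "(\<Sum>s=1..t0. (1/q)^s * CEw s) \<le> \<beta> * (1/q)^n / (1 - q)"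
  proof -
    have "(\<Sum>s=1..t0. (1/q)^s * CEw s) \<le> (\<Sum>s=1..t0. (1/q)^s * \<beta>)"
    proof (rule sum_mono)
      fix s assume s: "s \<in> {1..t0}"
      then have sn: "s \<in> {1..n}" using t0n by auto
      have "Xw (s-1) < q^(s-1) * \<Theta>" using below s by auto
      then have "\<bar>CEw s\<bar> \<le> \<beta>" using ce sn by blast
      then show "(1/q)^s * CEw s \<le> (1/q)^s * \<beta>"
        using q by (intro mult_left_mono) auto
    qed
    also have "\<dots> = \<beta> * (\<Sum>s=1..t0. (1/q)^s)" by (simp add: sum_distrib_left mult.commute)
    also have "\<dots> \<le> \<beta> * ((1/q)^t0 / (1 - q))"
      using geom_inv_sum[OF q, of t0] beta by (intro mult_left_mono) auto
    also have "\<dots> \<le> \<beta> * ((1/q)^n / (1 - q))"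
      using q t0n beta by (intro mult_left_mono divide_right_mono power_increasing) auto
    finally show ?thesis by simp
  qed
  have "(1/q)^t0 * Xw t0 \<ge> (1/q)^t0 * (q^t0 * \<Theta>)"
    using Xt0 q by (intro mult_left_mono) auto
  moreover have "(1/q)^t0 * (q^t0 * \<Theta>) = \<Theta>"
    using q by (simp add: power_one_over field_simps)
  ultimately have "\<Theta> \<le> Xw 0 + (\<Sum>s=1..t0. (1/q)^s * Uw s)"
    using tele[of t0] t0n by simp
  moreover have "(\<Sum>s=1..t0. (1/q)^s * (Uw s - CEw s)) =
      (\<Sum>s=1..t0. (1/q)^s * Uw s) - (\<Sum>s=1..t0. (1/q)^s * CEw s)"
    by (simp add: right_diff_distrib sum_subtractf)
  ultimately have "(\<Sum>s=1..t0. (1/q)^s * (Uw s - CEw s)) \<ge> \<Theta> - \<epsilon>0 - \<beta> * (1/q)^n / (1 - q)"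
    using ceb X0 by linarith
  then show ?thesis using t0n iff by blast
qed

lemma Dconst_ge:
  fixes C1 C2 C3 :: real and m :: nat and A B :: "nat \<Rightarrow> real"
  assumes "C1 > 0"
  shows "C2 / C1 \<le> Dconst m C1 C2 C3 A B" "C3 * sqrt (real m + 1) / sqrt C1 \<le> Dconst m C1 C2 C3 A B"
    "\<And>i. i \<in> {1..m} \<Longrightarrow> A i / C1 \<le> Dconst m C1 C2 C3 A B"
    "\<And>i. i \<in> {1..m} \<Longrightarrow> sqrt (real m + 1) * B i / sqrt C1 \<le> Dconst m C1 C2 C3 A B"
  unfolding Dconst_def
     apply (rule Max_ge, simp, blast)
    apply (rule Max_ge, simp, blast)
   apply (rule Max_ge, simp, blast)
  apply (rule Max_ge, simp, blast)
  done

lemma cp_bound: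
  fixes C1 C3 \<eta> r Dc :: real and B c d :: "nat \<Rightarrow> real"
  assumes C1: "C1 > 0" and eta: "\<eta> > 0" and r: "r > 0"
    and DC3: "C3 * sqrt (real m + 1) / sqrt C1 \<le> Dc"
    and DB: "\<And>i. i \<in> {1..m} \<Longrightarrow> sqrt (real m + 1) * B i / sqrt C1 \<le> Dc"
    and Bpos: "\<And>i. i \<in> {1..m} \<Longrightarrow> B i > 0" and C3: "C3 > 0"
  shows "C3 * \<eta> * sqrt r + (\<Sum>i=1..m. B i * \<eta> powr (1/2 + c i) * r powr d i)
         \<le> sqrt (C1 * \<eta>) * Dc * (sqrt (\<eta> * r) + (\<Sum>i=1..m. \<eta> powr c i * r powr d i))"
proof -
  have sm: "1 \<le> sqrt (real m + 1)" by simp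
  have sc: "sqrt C1 > 0" using C1 by simp
  have C3le: "C3 \<le> sqrt C1 * Dc"
  proof -
    have "C3 / sqrt C1 \<le> C3 * sqrt (real m + 1) / sqrt C1"
      using sm C3 sc by (intro divide_right_mono) (auto intro: mult_left_mono[of 1, simplified])
    then have "C3 / sqrt C1 \<le> Dc" using DC3 by linarith
    then show ?thesis using sc by (simp add: field_simps)
  qed
  have Ble: "B i \<le> sqrt C1 * Dc" if "i \<in> {1..m}" for i
  proof -
    have "B i / sqrt C1 \<le> sqrt (real m + 1) * B i / sqrt C1"
      using sm Bpos[OF that] sc by (intro divide_right_mono) (auto intro: mult_right_mono[of 1, simplified])
    then have "B i / sqrt C1 \<le> Dc" using DB[OF that] by linarith
    then show ?thesis using sc by (simp add: field_simps)
  qed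
  have t1: "C3 * \<eta> * sqrt r \<le> sqrt (C1 * \<eta>) * Dc * sqrt (\<eta> * r)"
  proof -
    have "C3 * \<eta> * sqrt r = C3 * (sqrt \<eta> * sqrt (\<eta> * r))"
      using eta r by (simp add: real_sqrt_mult)
    also have "\<dots> \<le> (sqrt C1 * Dc) * (sqrt \<eta> * sqrt (\<eta> * r))"
      by (rule mult_right_mono[OF C3le]) (use eta r in simp)
    also have "\<dots> = sqrt (C1 * \<eta>) * Dc * sqrt (\<eta> * r)" by (simp add: real_sqrt_mult)
    finally show ?thesis .
  qed
  have t2: "B i * \<eta> powr (1/2 + c i) * r powr d i \<le> sqrt (C1 * \<eta>) * Dc * (\<eta> powr c i * r powr d i)"
    if "i \<in> {1..m}" for i
  proof -
    have "B i * \<eta> powr (1/2 + c i) * r powr d i = B i * (sqrt \<eta> * (\<eta> powr c i * r powr d i))"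
      using eta by (simp add: powr_add powr_half_sqrt)
    also have "\<dots> \<le> (sqrt C1 * Dc) * (sqrt \<eta> * (\<eta> powr c i * r powr d i))"
      by (rule mult_right_mono[OF Ble[OF that]]) (use eta in simp)
    also have "\<dots> = sqrt (C1 * \<eta>) * Dc * (\<eta> powr c i * r powr d i)" by (simp add: real_sqrt_mult)
    finally show ?thesis .
  qed
  have "(\<Sum>i=1..m. B i * \<eta> powr (1/2 + c i) * r powr d i) \<le> (\<Sum>i=1..m. sqrt (C1 * \<eta>) * Dc * (\<eta> powr c i * r powr d i))"
    by (rule sum_mono) (rule t2)
  also have "\<dots> = sqrt (C1 * \<eta>) * Dc * (\<Sum>i=1..m. \<eta> powr c i * r powr d i)" by (simp add: sum_distrib_left)
  finally show ?thesis using t1 by (simp add: distrib_left)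
qed

lemma beta_bound:
  fixes C1 C2 \<eta> r Dc :: real and A a b :: "nat \<Rightarrow> real"
  assumes C1: "C1 > 0" and eta: "\<eta> > 0"
    and DC2: "C2 / C1 \<le> Dc"
    and DA: "\<And>i. i \<in> {1..m} \<Longrightarrow> A i / C1 \<le> Dc"
  shows "C2 * \<eta>\<^sup>2 + (\<Sum>i=1..m. A i * \<eta> powr (1 + a i) * r powr b i)
         \<le> C1 * \<eta> * Dc * (\<eta> + (\<Sum>i=1..m. \<eta> powr a i * r powr b i))"
proof -
  have t1: "C2 * \<eta>\<^sup>2 \<le> C1 * \<eta> * Dc * \<eta>"
  proof -
    have "C2 \<le> C1 * Dc" using DC2 C1 by (simp add: field_simps)
    then have "C2 * (\<eta> * \<eta>) \<le> (C1 * Dc) * (\<eta> * \<eta>)" by (rule mult_right_mono) simp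
    then show ?thesis by (simp add: power2_eq_square algebra_simps)
  qed
  have t2: "A i * \<eta> powr (1 + a i) * r powr b i \<le> C1 * \<eta> * Dc * (\<eta> powr a i * r powr b i)"
    if "i \<in> {1..m}" for i
  proof -
    have Ai: "A i \<le> C1 * Dc" using DA[OF that] C1 by (simp add: field_simps)
    have "A i * \<eta> powr (1 + a i) * r powr b i = A i * (\<eta> * (\<eta> powr a i * r powr b i))"
      using eta by (simp add: powr_add)
    also have "\<dots> \<le> (C1 * Dc) * (\<eta> * (\<eta> powr a i * r powr b i))"
      by (rule mult_right_mono[OF Ai]) (use eta in simp)
    finally show ?thesis by (simp add: algebra_simps)
  qed
  have "(\<Sum>i=1..m. A i * \<eta> powr (1 + a i) * r powr b i) \<le> (\<Sum>i=1..m. C1 * \<eta> * Dc * (\<eta> powr a i * r powr b i))"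
    by (rule sum_mono) (rule t2)
  also have "\<dots> = C1 * \<eta> * Dc * (\<Sum>i=1..m. \<eta> powr a i * r powr b i)" by (simp add: sum_distrib_left)
  finally show ?thesis using t1 by (simp add: distrib_left)
qed

lemma sum_powr_mono:
  fixes K e :: "nat \<Rightarrow> real" and x r :: real
  assumes "0 \<le> x" "x \<le> r" "\<And>i. i \<in> {1..m} \<Longrightarrow> K i \<ge> 0 \<and> e i \<ge> 0"
  shows "(\<Sum>i=1..m. K i * x powr e i) \<le> (\<Sum>i=1..m. K i * r powr e i)"
proof (rule sum_mono)
  fix i assume "i \<in> {1..m}"
  then have "K i \<ge> 0" "e i \<ge> 0" using assms(3) by auto
  then show "K i * x powr e i \<le> K i * r powr e i"
    using assms(1,2) by (intro mult_left_mono powr_mono2) auto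
qed

theorem lemma4:
  fixes M :: "'a measure" and F :: "nat \<Rightarrow> 'a measure"
    and X U :: "nat \<Rightarrow> 'a \<Rightarrow> real"
    and n m :: nat and \<eta> C1 C2 C3 :: real
    and A B a b c d :: "nat \<Rightarrow> real"
    and r \<delta> \<epsilon>0 :: real and E :: "'a set"
  assumes prob: "prob_space M"
    and filt_sub: "\<And>t. subalgebra M (F t)"
    and filt_mono: "\<And>s t. s \<le> t \<Longrightarrow> sets (F s) \<subseteq> sets (F t)"
    and n_ge: "n \<ge> 1"
    and eta_pos: "\<eta> > 0" and C1eta: "C1 * \<eta> < 1"
    and C_pos: "C1 > 0" "C2 > 0" "C3 > 0"
    and consts_pos: "\<And>i. i \<in> {1..m} \<Longrightarrow>
         A i > 0 \<and> B i > 0 \<and> a i > 0 \<and> b i > 0 \<and> c i > 0 \<and> d i > 0"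
    and X_adapted: "\<And>t. t \<le> n \<Longrightarrow> X t \<in> borel_measurable (F t)"
    and U_adapted: "\<And>t. t \<in> {1..n} \<Longrightarrow> U t \<in> borel_measurable (F t)"
    and U_int: "\<And>t. t \<in> {1..n} \<Longrightarrow> integrable M (U t)"
    and X_nonneg: "\<And>t. t \<le> n \<Longrightarrow> AE \<omega> in M. X t \<omega> \<ge> 0"
    and rec: "\<And>t. t \<in> {1..n} \<Longrightarrow>
         AE \<omega> in M. X t \<omega> \<le> (1 - C1 * \<eta>) * X (t - 1) \<omega> + U t \<omega>"
    and drift: "\<And>t. t \<in> {1..n} \<Longrightarrow>
         AE \<omega> in M. \<bar>real_cond_exp M (F (t - 1)) (U t) \<omega>\<bar> \<le>
            C2 * \<eta>\<^sup>2 + (\<Sum>i=1..m. A i * \<eta> powr (1 + a i) * X (t - 1) \<omega> powr b i)"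
    and bound: "\<And>t. t \<in> {1..n} \<Longrightarrow>
         AE \<omega> in M. \<bar>U t \<omega>\<bar> \<le>
            C3 * \<eta> * sqrt (X (t - 1) \<omega>) + (\<Sum>i=1..m. B i * \<eta> powr (1/2 + c i) * X (t - 1) \<omega> powr d i)"
    and r_in: "0 < r" "r < 1" and delta_in: "0 < \<delta>" "\<delta> < 1"
    and eps_pos: "\<epsilon>0 > 0"
    and eps_r: "\<epsilon>0 + Ddelta n m C1 C2 C3 \<eta> A B a b c d \<delta> r \<le> r"
    and E_meas: "E \<in> sets (F 0)"
    and E_sub: "E \<subseteq> {\<omega> \<in> space M. X 0 \<omega> \<le> \<epsilon>0}"
    and E_pos: "measure M E > 0"
  shows "measure M ({\<omega> \<in> space M. \<exists>t\<in>{1..n}.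
            X t \<omega> \<ge> (1 - C1 * \<eta>) ^ t * (\<epsilon>0 + Ddelta n m C1 C2 C3 \<eta> A B a b c d \<delta> r)} \<inter> E)
         \<le> \<delta>"
proof -
  interpret prob_space M by (rule prob)
  have sfs: "sigma_finite_subalgebra M (F t)" for t
    by (intro finite_measure_subalgebra_is_sigma_finite) (unfold_locales, rule filt_sub)
  have spF: "space (F t) = space M" for t using filt_sub[of t] by (simp add: subalgebra_def)
  have subsub: "subalgebra (F t) (F s)" if "s \<le> t" for s t
    using filt_sub[of s] filt_sub[of t] filt_mono[OF that] unfolding subalgebra_def by auto
  have measM: "f \<in> borel_measurable M" if "f \<in> borel_measurable (F t)" for f t
    using measurable_from_subalg[OF filt_sub that] .
  have measFt: "f \<in> borel_measurable (F t)" if "f \<in> borel_measurable (F s)" "s \<le> t" for f s t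
    using measurable_from_subalg[OF subsub[OF that(2)] that(1)] .

  define q where "q = 1 - C1 * \<eta>"
  have q: "0 < q" "q < 1" using C1eta C_pos eta_pos by (auto simp: q_def)
  have omq: "1 - q = C1 * \<eta>" by (simp add: q_def)
  define p where "p = 1 / q"
  have ppos: "p > 0" using q by (simp add: p_def)
  define Dc where "Dc = Dconst m C1 C2 C3 A B"
  have Dge: "C2 / C1 \<le> Dc" "C3 * sqrt (real m + 1) / sqrt C1 \<le> Dc"
    "\<And>i. i \<in> {1..m} \<Longrightarrow> A i / C1 \<le> Dc"
    "\<And>i. i \<in> {1..m} \<Longrightarrow> sqrt (real m + 1) * B i / sqrt C1 \<le> Dc"
    unfolding Dc_def using Dconst_ge[OF C_pos(1)] by auto
  have Dcpos: "Dc > 0" using Dge(1) C_pos by (smt (verit) divide_pos_pos)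
  define L where "L = ln (1/\<delta>)"
  have Lpos: "L > 0" using delta_in by (simp add: L_def)
  define S where "S = sqrt (\<eta>*r) + (\<Sum>i=1..m. \<eta> powr c i * r powr d i)"
  have Spos: "S > 0"
  proof -
    have "sqrt (\<eta>*r) > 0" using eta_pos r_in by simp
    moreover have "(\<Sum>i=1..m. \<eta> powr c i * r powr d i) \<ge> 0" by (intro sum_nonneg) simp
    ultimately show ?thesis unfolding S_def by linarith
  qed
  define T where "T = \<eta> + (\<Sum>i=1..m. \<eta> powr a i * r powr b i)"
  have Tnn: "T \<ge> 0"
  proof -
    have "(\<Sum>i=1..m. \<eta> powr a i * r powr b i) \<ge> 0" by (intro sum_nonneg) simp
    then show ?thesis using eta_pos by (simp add: T_def)
  qed
  define DD where "DD = Ddelta n m C1 C2 C3 \<eta> A B a b c d \<delta> r"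
  have DDeq: "DD = 8 * Dc * p^n * (sqrt L * S + T)"
    unfolding DD_def Ddelta_def Dc_def L_def S_def T_def p_def q_def
    by (simp add: power_one_over field_simps)
  define lam where "lam = 8 * Dc * p^n * sqrt L * S"
  have DDlam: "DD = lam + 8 * Dc * p^n * T" by (simp add: DDeq lam_def algebra_simps)
  have lampos: "lam > 0" using Dcpos ppos Lpos Spos by (simp add: lam_def)
  have DDpos: "DD > 0" using lampos Dcpos ppos Tnn DDlam
    by (smt (verit) mult_nonneg_nonneg zero_le_power)
  define \<Theta> where "\<Theta> = \<epsilon>0 + DD"
  have \<Theta>r: "\<Theta> \<le> r" using eps_r by (simp add: \<Theta>_def DD_def)
  have \<Theta>pos: "\<Theta> > 0" and eps\<Theta>: "\<epsilon>0 < \<Theta>" using eps_pos DDpos by (auto simp: \<Theta>_def)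
  define cp where "cp = C3*\<eta> * sqrt r + (\<Sum>i=1..m. B i * \<eta> powr (1/2 + c i) * r powr d i)"
  have cppos: "cp > 0"
  proof -
    have "C3*\<eta> * sqrt r > 0" using C_pos eta_pos r_in by simp
    moreover have "(\<Sum>i=1..m. B i * \<eta> powr (1/2 + c i) * r powr d i) \<ge> 0"
      by (intro sum_nonneg mult_nonneg_nonneg) (use consts_pos in \<open>force intro: less_imp_le\<close>, simp_all)
    ultimately show ?thesis unfolding cp_def by linarith
  qed
  have cpb: "cp \<le> sqrt (C1*\<eta>) * Dc * S"
    unfolding cp_def S_def
    by (rule cp_bound[OF C_pos(1) eta_pos r_in(1) Dge(2) Dge(4)]) (use consts_pos C_pos in auto)
  define \<beta> where "\<beta> = C2*\<eta>\<^sup>2 + (\<Sum>i=1..m. A i * \<eta> powr (1 + a i) * r powr b i)"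
  have \<beta>nn: "\<beta> \<ge> 0"
  proof -
    have "(\<Sum>i=1..m. A i * \<eta> powr (1 + a i) * r powr b i) \<ge> 0"
      by (intro sum_nonneg mult_nonneg_nonneg) (use consts_pos in \<open>force intro: less_imp_le\<close>, simp_all)
    then show ?thesis using C_pos by (simp add: \<beta>_def)
  qed
  have \<beta>b: "\<beta> \<le> C1*\<eta>*Dc*T"
    unfolding \<beta>_def T_def by (rule beta_bound[OF C_pos(1) eta_pos Dge(1) Dge(3)])

  define G where "G = (\<lambda>k. {\<omega>\<in>space M. \<omega> \<in> E \<and> (\<forall>j\<le>k. X j \<omega> < q^j * \<Theta>)})"
  have Gsets: "G k \<in> sets (F k)" if "k \<le> n" for k
  proof -
    have "G k = E \<inter> (\<Inter>j\<in>{..k}. {\<omega>\<in>space (F k). X j \<omega> < q^j * \<Theta>})"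
      using E_sub spF[of k] by (auto simp: G_def)
    also have "\<dots> \<in> sets (F k)"
    proof (intro sets.Int sets.finite_INT ballI)
      show "E \<in> sets (F k)" using E_meas filt_mono[of 0 k] by auto
      fix j assume "j \<in> {..k}"
      then have [measurable]: "X j \<in> borel_measurable (F k)" using measFt[OF X_adapted] that by auto
      show "{\<omega>\<in>space (F k). X j \<omega> < q^j*\<Theta>} \<in> sets (F k)" by measurable
    qed auto
    finally show ?thesis .
  qed

  define Vr where "Vr = (\<lambda>s \<omega>. p^s * (indicator (G (s-1)) \<omega> * U s \<omega>))"
  define cc where "cc = (\<lambda>s::nat. p^s * cp)"
  define V where "V = (\<lambda>s \<omega>. max (- cc s) (min (cc s) (Vr s \<omega>)))"
  define Wc where "Wc = (\<lambda>s x. max (- cc s) (min (cc s) (real_cond_exp M (F (s-1)) (V s) x)))"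
  define Zn where "Zn = (\<lambda>x. \<Sum>s=1..n. V s x - Wc s x)"
  have ccpos: "cc s > 0" for s using ppos cppos by (simp add: cc_def)
  have indF: "indicator (G (s-1)) \<in> borel_measurable (F (s-1))" if "s \<in> {1..n}" for s :: nat
    using Gsets[of "s-1"] that by (intro borel_measurable_indicator) auto
  have VrF: "Vr s \<in> borel_measurable (F s)" if "s \<in> {1..n}" for s
  proof -
    have [measurable]: "indicator (G (s-1)) \<in> borel_measurable (F s)"
      using measFt[OF indF[OF that], of s] by simp
    have [measurable]: "U s \<in> borel_measurable (F s)" using U_adapted[OF that] .
    show ?thesis unfolding Vr_def by measurable
  qed
  have VF: "V s \<in> borel_measurable (F s)" if "s \<in> {1..n}" for s
  proof -
    have [measurable]: "Vr s \<in> borel_measurable (F s)" using VrF[OF that] .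
    show ?thesis unfolding V_def by measurable
  qed
  have VM: "V s \<in> borel_measurable M" if "s \<in> {1..n}" for s using measM[OF VF[OF that]] .
  have VrM: "Vr s \<in> borel_measurable M" if "s \<in> {1..n}" for s using measM[OF VrF[OF that]] .
  have WcM: "Wc s \<in> borel_measurable M" for s unfolding Wc_def by measurable
  have Vbd: "\<bar>V s x\<bar> \<le> cc s" for s x using ccpos[of s] by (auto simp: V_def)
  have Wcbd: "\<bar>Wc s x\<bar> \<le> cc s" for s x using ccpos[of s] by (auto simp: Wc_def)
  have Vint: "integrable M (V s)" if "s \<in> {1..n}" for s
    using bounded_integrable[OF prob VM[OF that] Vbd] .
  have mgf: "(\<integral>x. exp (\<theta> * Zn x) \<partial>M) \<le> exp (\<theta>\<^sup>2/2 * (\<Sum>s=1..n. (2*cc s)\<^sup>2))" if "\<theta> \<ge> 0" for \<theta>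
    unfolding Zn_def Wc_def
    by (rule azuma_mgf[OF prob filt_sub filt_mono VF Vbd ccpos that])

  have AE_V: "AE \<omega> in M. \<forall>s\<in>{1..n}. V s \<omega> = Vr s \<omega>"
  proof (rule AE_finite_allI, simp)
    fix s assume s: "s \<in> {1..n}"
    have s1: "s - 1 \<le> n" using s by auto
    from bound[OF s] X_nonneg[OF s1]
    show "AE \<omega> in M. V s \<omega> = Vr s \<omega>"
    proof eventually_elim
      case (elim \<omega>)
      show ?case
      proof (cases "\<omega> \<in> G (s-1)")
        case True
        then have "X (s-1) \<omega> < q^(s-1) * \<Theta>" by (auto simp: G_def)
        also have "\<dots> \<le> \<Theta>" using q \<Theta>pos by (intro mult_left_le_one_le power_le_one) auto
        finally have Xr: "X (s-1) \<omega> \<le> r" using \<Theta>r by simp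
        have "C3 * \<eta> * sqrt (X (s-1) \<omega>) \<le> C3 * \<eta> * sqrt r"
          using Xr C_pos eta_pos by (intro mult_left_mono) auto
        moreover have "(\<Sum>i=1..m. B i * \<eta> powr (1/2 + c i) * X (s-1) \<omega> powr d i)
            \<le> (\<Sum>i=1..m. B i * \<eta> powr (1/2 + c i) * r powr d i)"
          by (rule sum_powr_mono[OF elim(2) Xr]) (use consts_pos in force)
        ultimately have "\<bar>U s \<omega>\<bar> \<le> cp" using elim(1) unfolding cp_def by linarith
        then have "\<bar>Vr s \<omega>\<bar> \<le> cc s" using True ppos
          by (simp add: Vr_def cc_def abs_mult mult_left_mono)
        then show ?thesis by (simp add: V_def abs_le_iff)
      next
        case False then show ?thesis using ccpos[of s] by (simp add: V_def Vr_def)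
      qed
    qed
  qed
  have AE_W: "AE \<omega> in M. \<forall>s\<in>{1..n}. Wc s \<omega> = real_cond_exp M (F (s-1)) (V s) \<omega>"
  proof (rule AE_finite_allI, simp)
    fix s assume s: "s \<in> {1..n}"
    have "AE x in M. real_cond_exp M (F (s-1)) (V s) x \<le> cc s"
      by (rule sigma_finite_subalgebra.real_cond_exp_le_c[OF sfs Vint[OF s]])
         (use Vbd in \<open>auto intro!: AE_I2 simp: abs_le_iff\<close>)
    moreover have "AE x in M. real_cond_exp M (F (s-1)) (V s) x \<ge> - cc s"
      by (rule sigma_finite_subalgebra.real_cond_exp_ge_c[OF sfs Vint[OF s]])
         (use Vbd in \<open>auto intro!: AE_I2 simp: abs_le_iff, smt (verit)\<close>)
    ultimately show "AE \<omega> in M. Wc s \<omega> = real_cond_exp M (F (s-1)) (V s) \<omega>"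
      unfolding Wc_def by eventually_elim auto
  qed
  have AE_CV: "AE \<omega> in M. \<forall>s\<in>{1..n}. real_cond_exp M (F (s-1)) (V s) \<omega> = real_cond_exp M (F (s-1)) (Vr s) \<omega>"
  proof (rule AE_finite_allI, simp)
    fix s assume s: "s \<in> {1..n}"
    have "AE \<omega> in M. V s \<omega> = Vr s \<omega>" by (rule eventually_mono[OF AE_V]) (use s in auto)
    then show "AE \<omega> in M. real_cond_exp M (F (s-1)) (V s) \<omega> = real_cond_exp M (F (s-1)) (Vr s) \<omega>"
      by (rule sigma_finite_subalgebra.real_cond_exp_cong[OF sfs _ VM[OF s] VrM[OF s]])
  qed
  have AE_CVr: "AE \<omega> in M. \<forall>s\<in>{1..n}. real_cond_exp M (F (s-1)) (Vr s) \<omega> =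
      p^s * (indicator (G (s-1)) \<omega> * real_cond_exp M (F (s-1)) (U s) \<omega>)"
  proof (rule AE_finite_allI, simp)
    fix s assume s: "s \<in> {1..n}"
    have GM: "G (s-1) \<in> sets M" using Gsets[of "s-1"] s filt_sub[of "s-1"] by (auto simp: subalgebra_def)
    have UM: "U s \<in> borel_measurable M" using measM[OF U_adapted[OF s]] .
    have int1: "integrable M (\<lambda>\<omega>. indicator (G (s-1)) \<omega> * U s \<omega>)"
      using integrable_real_mult_indicator[OF GM U_int[OF s]] by (simp add: mult.commute)
    have e1: "AE \<omega> in M. real_cond_exp M (F (s-1)) (\<lambda>\<omega>. p^s * (indicator (G (s-1)) \<omega> * U s \<omega>)) \<omega>
        = p^s * real_cond_exp M (F (s-1)) (\<lambda>\<omega>. indicator (G (s-1)) \<omega> * U s \<omega>) \<omega>"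
      by (rule sigma_finite_subalgebra.real_cond_exp_cmult[OF sfs int1])
    have e2: "AE \<omega> in M. real_cond_exp M (F (s-1)) (\<lambda>\<omega>. indicator (G (s-1)) \<omega> * U s \<omega>) \<omega>
        = indicator (G (s-1)) \<omega> * real_cond_exp M (F (s-1)) (U s) \<omega>"
      by (rule sigma_finite_subalgebra.real_cond_exp_mult[OF sfs indF[OF s] UM int1])
    from e1 e2 show "AE \<omega> in M. real_cond_exp M (F (s-1)) (Vr s) \<omega> =
      p^s * (indicator (G (s-1)) \<omega> * real_cond_exp M (F (s-1)) (U s) \<omega>)"
      unfolding Vr_def by eventually_elim simp
  qed
  have AE_rec: "AE \<omega> in M. \<forall>t\<in>{1..n}. X t \<omega> \<le> q * X (t - 1) \<omega> + U t \<omega>"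
    by (rule AE_finite_allI) (use rec in \<open>simp_all add: q_def\<close>)
  have AE_drift: "AE \<omega> in M. \<forall>t\<in>{1..n}. \<bar>real_cond_exp M (F (t - 1)) (U t) \<omega>\<bar> \<le>
            C2 * \<eta>\<^sup>2 + (\<Sum>i=1..m. A i * \<eta> powr (1 + a i) * X (t - 1) \<omega> powr b i)"
    by (rule AE_finite_allI) (use drift in simp_all)
  have AE_nn: "AE \<omega> in M. \<forall>t\<in>{..n}. X t \<omega> \<ge> 0"
    by (rule AE_finite_allI) (use X_nonneg in simp_all)

  have key: "AE \<omega> in M. \<omega> \<in> E \<and> (\<exists>t\<in>{1..n}. q^t * \<Theta> \<le> X t \<omega>) \<longrightarrow> lam \<le> Zn \<omega>"
    using AE_V AE_W AE_CV AE_CVr AE_rec AE_drift AE_nn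
  proof eventually_elim
    case (elim \<omega>)
    show ?case
    proof (intro impI, elim conjE bexE)
      fix t assume \<omega>E: "\<omega> \<in> E" and t: "t \<in> {1..n}" and tX: "q^t * \<Theta> \<le> X t \<omega>"
      have \<omega>sp: "\<omega> \<in> space M" and X0: "X 0 \<omega> \<le> \<epsilon>0" using \<omega>E E_sub by auto
      define CE where "CE = (\<lambda>s. real_cond_exp M (F (s-1)) (U s) \<omega>)"
      have ce: "\<bar>CE s\<bar> \<le> \<beta>" if s: "s \<in> {1..n}" and lt: "X (s-1) \<omega> < q^(s-1) * \<Theta>" for s
      proof -
        have "q^(s-1) * \<Theta> \<le> \<Theta>" using q \<Theta>pos by (intro mult_left_le_one_le power_le_one) auto
        then have Xr: "X (s-1) \<omega> \<le> r" using lt \<Theta>r by simp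
        have Xnn: "X (s-1) \<omega> \<ge> 0" using elim(7) s by auto
        have "(\<Sum>i=1..m. A i * \<eta> powr (1 + a i) * X (s-1) \<omega> powr b i)
            \<le> (\<Sum>i=1..m. A i * \<eta> powr (1 + a i) * r powr b i)"
          by (rule sum_powr_mono[OF Xnn Xr]) (use consts_pos in force)
        then show ?thesis using elim(6) s unfolding CE_def \<beta>_def by fastforce
      qed
      obtain t0 where t0n: "t0 \<in> {1..n}"
        and iff: "\<forall>s\<in>{1..n}. (\<forall>j\<le>s-1. X j \<omega> < q^j * \<Theta>) \<longleftrightarrow> s \<le> t0"
        and sb: "(\<Sum>s=1..t0. (1/q)^s * (U s \<omega> - CE s)) \<ge> \<Theta> - \<epsilon>0 - \<beta> * (1/q)^n / (1 - q)"
        using pathwise[of q \<epsilon>0 \<Theta> "\<lambda>j. X j \<omega>" \<beta> n "\<lambda>s. U s \<omega>" CE t] q eps\<Theta> X0 \<beta>nn elim(5) ce t tX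
        by blast
      have termeq: "V s \<omega> - Wc s \<omega> = (if s \<in> {..t0} then (1/q)^s * (U s \<omega> - CE s) else 0)"
        if s: "s \<in> {1..n}" for s
      proof -
        have ind: "indicator (G (s-1)) \<omega> = (if s \<le> t0 then 1 else (0::real))"
          using iff s \<omega>sp \<omega>E by (auto simp: G_def indicator_def)
        have "V s \<omega> - Wc s \<omega> = p^s * (indicator (G (s-1)) \<omega> * U s \<omega>) - p^s * (indicator (G (s-1)) \<omega> * CE s)"
          using elim(1-4) s by (simp add: Vr_def CE_def)
        then show ?thesis using ind by (simp add: p_def right_diff_distrib)
      qed
      have "Zn \<omega> = (\<Sum>s\<in>{1..n}. if s \<in> {..t0} then (1/q)^s * (U s \<omega> - CE s) else 0)"
        unfolding Zn_def using termeq by (intro sum.cong) auto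
      also have "\<dots> = (\<Sum>s\<in>{1..n} \<inter> {..t0}. (1/q)^s * (U s \<omega> - CE s))"
        by (rule sum.inter_restrict[symmetric]) simp
      also have "{1..n} \<inter> {..t0} = {1..t0}" using t0n by auto
      finally have Zeq: "Zn \<omega> = (\<Sum>s=1..t0. (1/q)^s * (U s \<omega> - CE s))" .
      have "\<beta> * (1/q)^n / (1 - q) \<le> (C1 * \<eta> * Dc * T) * (1/q)^n / (1 - q)"
        by (intro divide_right_mono mult_right_mono) (use \<beta>b q in auto)
      also have "\<dots> = Dc * p^n * T" using C_pos eta_pos by (simp add: omq p_def field_simps)
      also have "\<dots> \<le> 8 * Dc * p^n * T" using Dcpos ppos Tnn by (simp add: mult_nonneg_nonneg)
      finally have "\<beta> * (1/q)^n / (1 - q) \<le> 8 * Dc * p^n * T" .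
      then show "lam \<le> Zn \<omega>" using Zeq sb DDlam unfolding \<Theta>_def by linarith
    qed
  qed

  have ZnM: "Zn \<in> borel_measurable M"
    unfolding Zn_def by (intro borel_measurable_sum borel_measurable_diff VM WcM) auto
  define K where "K = (\<Sum>s=1..n. 2 * cc s)"
  have Znbd: "\<bar>Zn x\<bar> \<le> K" for x
  proof -
    have "\<bar>Zn x\<bar> \<le> (\<Sum>s=1..n. \<bar>V s x - Wc s x\<bar>)" unfolding Zn_def by (rule sum_abs)
    also have "\<dots> \<le> K" unfolding K_def
    proof (rule sum_mono)
      fix s show "\<bar>V s x - Wc s x\<bar> \<le> 2 * cc s" using Vbd[of s x] Wcbd[of s x] by auto
    qed
    finally show ?thesis .
  qed
  have p1: "p \<ge> 1" using q by (simp add: p_def)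
  define V0 where "V0 = 4 * (p^n)\<^sup>2 * Dc\<^sup>2 * S\<^sup>2"
  have V0pos: "V0 > 0" using ppos Dcpos Spos by (simp add: V0_def)
  define \<theta> where "\<theta> = lam / V0"
  have \<theta>pos: "\<theta> > 0" using lampos V0pos by (simp add: \<theta>_def)
  have cp2: "cp\<^sup>2 \<le> C1 * \<eta> * Dc\<^sup>2 * S\<^sup>2"
  proof -
    have "cp\<^sup>2 \<le> (sqrt (C1 * \<eta>) * Dc * S)\<^sup>2" using cpb cppos by (intro power_mono) auto
    also have "\<dots> = C1 * \<eta> * Dc\<^sup>2 * S\<^sup>2" using C_pos eta_pos by (simp add: power_mult_distrib)
    finally show ?thesis .
  qed
  have sumcc: "(\<Sum>s=1..n. (2*cc s)\<^sup>2) \<le> V0"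
  proof -
    have "(\<Sum>s=1..n. (2*cc s)\<^sup>2) = 4 * cp\<^sup>2 * (\<Sum>s=1..n. p^s * p^s)"
      by (simp add: cc_def sum_distrib_left power2_eq_square algebra_simps)
    also have "\<dots> \<le> 4 * cp\<^sup>2 * (\<Sum>s=1..n. p^n * p^s)"
      by (intro mult_left_mono sum_mono mult_right_mono power_increasing) (use p1 ppos in auto)
    also have "\<dots> = 4 * cp\<^sup>2 * p^n * (\<Sum>s=1..n. p^s)"
      by (simp add: sum_distrib_left algebra_simps)
    also have "\<dots> \<le> 4 * cp\<^sup>2 * p^n * (p^n / (1 - q))"
      unfolding p_def by (intro mult_left_mono geom_inv_sum q) (use q in auto)
    also have "\<dots> = 4 * cp\<^sup>2 * (p^n)\<^sup>2 / (C1 * \<eta>)" by (simp add: omq power2_eq_square)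
    also have "\<dots> \<le> 4 * (C1 * \<eta> * Dc\<^sup>2 * S\<^sup>2) * (p^n)\<^sup>2 / (C1 * \<eta>)"
      using cp2 C_pos eta_pos by (intro divide_right_mono mult_right_mono mult_left_mono) auto
    also have "\<dots> = V0" using C_pos eta_pos by (simp add: V0_def)
    finally show ?thesis .
  qed
  have expint: "integrable M (\<lambda>x. exp (\<theta> * Zn x))"
    by (rule bounded_integrable[OF prob, of _ "exp (\<theta> * K)"]) (use ZnM in measurable,
        use Znbd \<theta>pos in \<open>auto simp: abs_le_iff intro: mult_left_mono\<close>)
  have "measure M ({\<omega> \<in> space M. \<exists>t\<in>{1..n}.
            X t \<omega> \<ge> (1 - C1 * \<eta>) ^ t * (\<epsilon>0 + Ddelta n m C1 C2 C3 \<eta> A B a b c d \<delta> r)} \<inter> E)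
         \<le> measure M {\<omega>\<in>space M. lam \<le> Zn \<omega>}"
  proof (rule finite_measure_mono_AE)
    show "AE x in M. x \<in> {\<omega> \<in> space M. \<exists>t\<in>{1..n}.
            X t \<omega> \<ge> (1 - C1 * \<eta>) ^ t * (\<epsilon>0 + Ddelta n m C1 C2 C3 \<eta> A B a b c d \<delta> r)} \<inter> E
        \<longrightarrow> x \<in> {\<omega>\<in>space M. lam \<le> Zn \<omega>}"
      using key by eventually_elim (auto simp: q_def \<Theta>_def DD_def)
    show "{\<omega>\<in>space M. lam \<le> Zn \<omega>} \<in> sets M" using ZnM by measurable
  qed
  also have "{\<omega>\<in>space M. lam \<le> Zn \<omega>} = {\<omega>\<in>space M. exp (\<theta> * Zn \<omega>) \<ge> exp (\<theta> * lam)}"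
    using \<theta>pos by auto
  also have "measure M \<dots> \<le> (\<integral>x. exp (\<theta> * Zn x) \<partial>M) / exp (\<theta> * lam)"
    by (rule integral_Markov_inequality_measure[OF expint sets.top]) auto
  also have "\<dots> \<le> exp (\<theta>\<^sup>2/2 * V0) / exp (\<theta> * lam)"
  proof (rule divide_right_mono)
    have "(\<integral>x. exp (\<theta> * Zn x) \<partial>M) \<le> exp (\<theta>\<^sup>2/2 * (\<Sum>s=1..n. (2*cc s)\<^sup>2))"
      using mgf \<theta>pos by simp
    also have "\<dots> \<le> exp (\<theta>\<^sup>2/2 * V0)" using sumcc by (simp add: mult_left_mono)
    finally show "(\<integral>x. exp (\<theta> * Zn x) \<partial>M) \<le> exp (\<theta>\<^sup>2/2 * V0)" .
  qed simp
  also have "\<dots> = exp (\<theta>\<^sup>2/2 * V0 - \<theta> * lam)" by (simp add: exp_diff)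
  also have "\<theta>\<^sup>2/2 * V0 - \<theta> * lam = - (lam\<^sup>2 / (2 * V0))"
    using V0pos by (simp add: \<theta>_def field_simps power2_eq_square)
  also have "lam\<^sup>2 = 64 * Dc\<^sup>2 * (p^n)\<^sup>2 * L * S\<^sup>2"
    using Lpos by (simp add: lam_def power_mult_distrib)
  also have "- (64 * Dc\<^sup>2 * (p^n)\<^sup>2 * L * S\<^sup>2 / (2 * V0)) = - 8 * L"
    using ppos Dcpos Spos by (simp add: V0_def field_simps)
  also have "exp (- 8 * L) \<le> exp (- L)" using Lpos by simp
  also have "exp (- L) = \<delta>" using delta_in by (simp add: L_def ln_div)
  finally show ?thesis .
qed

end
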